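(* There exist constants $0<c_1\le c_2$ such that for every $\Delta>0$ there is a probability density $f_\Delta$ on $\mathbb R$ such that a random variable $T$ with density $f_\Delta$ satisfies: $c_1/\Delta\le\langle|T|\rangle\le c_2/\Delta$ (i.e. $\langle|T|\rangle=\Theta(1/\Delta)$); its characteristic function $\Phi(\omega)=\mathbb E[e^{i\omega T}]$ vanishes for all $|\omega|\ge\Delta$; and all its central moments are finite, $\langle (T-\langle T\rangle)^n\rangle<\infty$ for all $n\ge 0$.
   Context: $\langle\cdot\rangle$ denotes expectation. *)

theory Defs
  imports "HOL-Probability.Probability"
begin

end

theory Submission
  imports Defs
begin


lemma integrable_inv_1_sq: "integrable lborel (\<lambda>x::real. inverse (1 + x^2))"
proof -
  have "einterval (-\<infinity>) \<infinity> = (UNIV::real set)" by (auto simp: einterval_def)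
  with integrable_inverse_1_plus_square show ?thesis
    by (simp add: set_integrable_def)
qed

lemma gauss_integrable:
  assumes e: "(e::real) > 0"
  shows "integrable lborel (\<lambda>x. exp (- e * x^2))"
proof -
  define c where "c = sqrt (2*e)"
  have c: "c > 0" using e by (simp add: c_def)
  have "integrable lborel (\<lambda>x. std_normal_density (0 + c * x))"
    by (rule lborel_integrable_real_affine[OF integrable_normal_density]) (use c in auto)
  then have "integrable lborel (\<lambda>x. sqrt (2*pi) * std_normal_density (0 + c * x))"
    by (rule integrable_mult_right)
  moreover have "(\<lambda>x. sqrt (2*pi) * std_normal_density (0 + c * x)) = (\<lambda>x. exp (- e * x^2))"
    using e by (simp add: std_normal_density_def c_def power_mult_distrib)
  ultimately show ?thesis by (simp only:)
qed

lemma gauss_ft: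
  assumes e: "(e::real) > 0"
  shows "(CLINT x|lborel. exp (- e * x^2) *\<^sub>R iexp (w * x)) = complex_of_real (sqrt (pi / e) * exp (- (w^2) / (4*e)))"
proof -
  define c where "c = sqrt (2*e)"
  have c: "c > 0" using e by (simp add: c_def)
  have "char std_normal_distribution (w / c) = complex_of_real (exp (- ((w/c)^2) / 2))"
    by (simp add: char_std_normal_distribution)
  moreover have "(w/c)^2 / 2 = w^2 / (4*e)" using e by (simp add: c_def power_divide)
  ultimately have 1: "char std_normal_distribution (w / c) = complex_of_real (exp (- (w^2) / (4*e)))" by simp
  have "char std_normal_distribution (w / c) = (CLINT x|lborel. std_normal_density x *\<^sub>R iexp ((w/c) * x))"
    unfolding char_def by (subst integral_density) auto
  also have "\<dots> = c *\<^sub>R (CLINT x|lborel. std_normal_density (0 + c * x) *\<^sub>R iexp ((w/c) * (0 + c * x)))"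
    using lborel_integral_real_affine[of c "\<lambda>x. std_normal_density x *\<^sub>R iexp ((w/c) * x)" 0] c by simp
  also have "\<dots> = c *\<^sub>R (CLINT x|lborel. std_normal_density (c * x) *\<^sub>R iexp (w * x))"
    using c by simp
  also have "\<dots> = c *\<^sub>R (CLINT x|lborel. (1 / sqrt (2 * pi)) *\<^sub>R (exp (- e * x^2) *\<^sub>R iexp (w * x)))"
    using c e by (simp add: std_normal_density_def c_def power_mult_distrib)
  also have "\<dots> = (c / sqrt (2*pi)) *\<^sub>R (CLINT x|lborel. exp (- e * x^2) *\<^sub>R iexp (w * x))"
    by (subst integral_scaleR_right) simp
  finally have "(CLINT x|lborel. exp (- e * x^2) *\<^sub>R iexp (w * x)) = (sqrt (2*pi) / c) *\<^sub>R complex_of_real (exp (- (w^2) / (4*e)))"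
    using 1 c by (simp add: field_simps)
  also have "sqrt (2*pi) / c = sqrt (pi / e)" using e by (simp add: c_def real_sqrt_divide[symmetric])
  finally show ?thesis by (simp add: scaleR_conv_of_real)
qed

definition GI :: "real \<Rightarrow> (real \<Rightarrow> real) \<Rightarrow> real \<Rightarrow> complex" where
  "GI e h w = (CLINT x|lborel. (h x * exp (- e * x^2)) *\<^sub>R iexp (w * x))"

definition BB :: "real \<Rightarrow> real \<Rightarrow> real" where
  "BB e d = sqrt (pi / e) * exp (- (d^2) / (4*e))"

lemma BB_mono: assumes "e > 0" "0 \<le> d1" "d1 \<le> d2" shows "BB e d2 \<le> BB e d1"
proof -
  have "d1^2 \<le> d2^2" using assms by (simp add: power_mono)
  then have "- (d2^2) / (4*e) \<le> - (d1^2) / (4*e)" using assms by (simp add: divide_right_mono)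
  then show ?thesis unfolding BB_def using assms(1) by (intro mult_left_mono) auto
qed

lemma GI_integrable:
  assumes e: "e > 0" and h: "h \<in> borel_measurable borel" and hb: "\<And>x. \<bar>h x\<bar> \<le> 1"
  shows "integrable lborel (\<lambda>x. (h x * exp (- e * x^2)) *\<^sub>R iexp (w * x))"
proof (rule Bochner_Integration.integrable_bound[OF gauss_integrable[OF e]])
  show "(\<lambda>x. (h x * exp (- e * x^2)) *\<^sub>R iexp (w * x)) \<in> borel_measurable lborel"
    using h by measurable
  show "AE x in lborel. norm ((h x * exp (- e * x^2)) *\<^sub>R iexp (w * x)) \<le> norm (exp (- e * x^2))"
  proof (rule AE_I2)
    fix x
    have "norm ((h x * exp (- e * x^2)) *\<^sub>R iexp (w * x)) = \<bar>h x\<bar> * exp (- e * x^2)"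
      by (simp add: abs_mult norm_exp_i_times)
    also have "\<dots> \<le> exp (- e * x^2)" using hb[of x] by (simp add: mult_left_le_one_le)
    finally show "norm ((h x * exp (- e * x^2)) *\<^sub>R iexp (w * x)) \<le> norm (exp (- e * x^2))" by simp
  qed
qed

lemma GI_cos:
  assumes e: "e > 0" and h: "h \<in> borel_measurable borel" and hb: "\<And>x. \<bar>h x\<bar> \<le> 1"
  shows "GI e (\<lambda>x. cos (a * x) * h x) w = (GI e h (w + a) + GI e h (w - a)) / 2"
proof -
  have eq: "(cos (a * x) * h x * exp (- e * x^2)) *\<^sub>R iexp (w * x) =
     ((h x * exp (- e * x^2)) *\<^sub>R iexp ((w + a) * x) + (h x * exp (- e * x^2)) *\<^sub>R iexp ((w - a) * x)) / 2" for x
  proof -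
    have "complex_of_real (cos (a*x)) = (iexp (a*x) + iexp (-(a*x))) / 2"
      by (simp add: cos_of_real[symmetric] cos_exp_eq)
    then have "(cos (a * x) * h x * exp (- e * x^2)) *\<^sub>R iexp (w * x) =
       ((iexp (a*x) + iexp (-(a*x))) / 2) * complex_of_real (h x * exp (- e * x^2)) * iexp (w * x)"
      by (simp add: scaleR_conv_of_real)
    also have "\<dots> = (complex_of_real (h x * exp (- e * x^2)) * (iexp (a*x) * iexp (w * x))
         + complex_of_real (h x * exp (- e * x^2)) * (iexp (-(a*x)) * iexp (w * x))) / 2"
      by (simp add: algebra_simps)
    also have "iexp (a*x) * iexp (w * x) = iexp ((w + a) * x)"
      by (simp add: exp_add[symmetric] algebra_simps)
    also have "iexp (-(a*x)) * iexp (w * x) = iexp ((w - a) * x)"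
      by (simp add: exp_add[symmetric] algebra_simps)
    finally show ?thesis by (simp add: scaleR_conv_of_real)
  qed
  show ?thesis
    unfolding GI_def eq
    using GI_integrable[OF e h hb, of "w + a"] GI_integrable[OF e h hb, of "w - a"]
    by (simp add: integral_add)
qed

lemma prod_cos_bound: "\<bar>\<Prod>k\<in>I. cos (c k * x)\<bar> \<le> (1::real)"
  by (simp add: abs_prod prod_le_1)

lemma GI_prod_bound:
  assumes e: "e > 0" and fin: "finite I"
  shows "\<forall>w. (\<Sum>k\<in>I. \<bar>c k\<bar>) \<le> \<bar>w\<bar> \<longrightarrow>
     norm (GI e (\<lambda>x. \<Prod>k\<in>I. cos (c k * x)) w) \<le> BB e (\<bar>w\<bar> - (\<Sum>k\<in>I. \<bar>c k\<bar>))"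
  using fin
proof (induction I rule: finite_induct)
  case empty
  show ?case
  proof (intro allI impI)
    fix w :: real
    have "GI e (\<lambda>x. \<Prod>k\<in>{}. cos (c k * x)) w = complex_of_real (BB e \<bar>w\<bar>)"
      unfolding GI_def BB_def using gauss_ft[OF e, of w] by simp
    then show "norm (GI e (\<lambda>x. \<Prod>k\<in>{}. cos (c k * x)) w) \<le> BB e (\<bar>w\<bar> - (\<Sum>k\<in>{}. \<bar>c k\<bar>))"
      using e by (simp add: BB_def norm_mult)
  qed
next
  case (insert k I)
  let ?S = "\<Sum>k\<in>I. \<bar>c k\<bar>"
  let ?h = "\<lambda>x. \<Prod>k\<in>I. cos (c k * x)"
  show ?case
  proof (intro allI impI)
    fix w :: real
    assume w: "(\<Sum>k\<in>insert k I. \<bar>c k\<bar>) \<le> \<bar>w\<bar>"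
    have S: "(\<Sum>k\<in>insert k I. \<bar>c k\<bar>) = \<bar>c k\<bar> + ?S" using insert by simp
    have Snn: "0 \<le> ?S" by (simp add: sum_nonneg)
    have hm: "?h \<in> borel_measurable borel" by measurable
    have eqp: "(\<lambda>x. \<Prod>k\<in>insert k I. cos (c k * x)) = (\<lambda>x. cos (c k * x) * ?h x)"
      using insert by simp
    have G: "GI e (\<lambda>x. \<Prod>k\<in>insert k I. cos (c k * x)) w = (GI e ?h (w + c k) + GI e ?h (w - c k)) / 2"
      unfolding eqp by (rule GI_cos[OF e hm prod_cos_bound])
    have b: "norm (GI e ?h (w + s)) \<le> BB e (\<bar>w\<bar> - (\<bar>c k\<bar> + ?S))" if s: "\<bar>s\<bar> = \<bar>c k\<bar>" for s
    proof -
      have ws: "?S \<le> \<bar>w + s\<bar>" "\<bar>w\<bar> - (\<bar>c k\<bar> + ?S) \<le> \<bar>w + s\<bar> - ?S" using w S s by linarith+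
      have "norm (GI e ?h (w + s)) \<le> BB e (\<bar>w + s\<bar> - ?S)" using insert.IH ws(1) by blast
      also have "\<dots> \<le> BB e (\<bar>w\<bar> - (\<bar>c k\<bar> + ?S))"
        using ws w S by (intro BB_mono[OF e]) linarith+
      finally show ?thesis .
    qed
    have "norm (GI e (\<lambda>x. \<Prod>k\<in>insert k I. cos (c k * x)) w) \<le> (norm (GI e ?h (w + c k)) + norm (GI e ?h (w + - c k))) / 2"
      unfolding G by (simp add: norm_triangle_ineq)
    also have "\<dots> \<le> (BB e (\<bar>w\<bar> - (\<bar>c k\<bar> + ?S)) + BB e (\<bar>w\<bar> - (\<bar>c k\<bar> + ?S))) / 2"
      using b[of "c k"] b[of "- c k"] by simp
    finally show "norm (GI e (\<lambda>x. \<Prod>k\<in>insert k I. cos (c k * x)) w) \<le> BB e (\<bar>w\<bar> - (\<Sum>k\<in>insert k I. \<bar>c k\<bar>))"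
      unfolding S by simp
  qed
qed



lemma cos_lower: "1 - t^2/2 \<le> cos (t::real)"
proof -
  have "cos t = 1 - 2 * sin (t/2) ^ 2" using cos_double_sin[of "t/2"] by simp
  moreover have "sin (t/2) ^ 2 \<le> (t/2)^2"
    using abs_sin_x_le_abs_x[of "t/2"] by (metis abs_ge_zero power2_abs power_mono)
  ultimately show ?thesis by (simp add: power_divide)
qed

lemma sin_lower_pos: assumes "0 \<le> t" "t \<le> (1::real)" shows "t/2 \<le> sin t"
proof -
  have "(\<lambda>t. sin t - t/2) 0 \<le> (\<lambda>t. sin t - t/2) t"
  proof (rule DERIV_nonneg_imp_nondecreasing[OF assms(1)])
    fix x assume x0: "0 \<le> x" and x1: "x \<le> t"
    have x: "0 \<le> x \<and> x \<le> t" using x0 x1 by simp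
    have "1 - x^2/2 \<le> cos x" by (rule cos_lower)
    moreover have "x^2 \<le> 1" using x assms by (simp add: abs_le_iff power_le_one)
    ultimately have "cos x - 1/2 \<ge> 0" by linarith
    moreover have "((\<lambda>t. sin t - t/2) has_real_derivative (cos x - 1/2)) (at x)"
      by (auto intro!: derivative_eq_intros)
    ultimately show "\<exists>y. ((\<lambda>t. sin t - t/2) has_real_derivative y) (at x) \<and> 0 \<le> y" by blast
  qed
  then show ?thesis by simp
qed

lemma abs_sin_lower: assumes "\<bar>t\<bar> \<le> (1::real)" shows "\<bar>t\<bar>/2 \<le> \<bar>sin t\<bar>"
proof (cases "t \<ge> 0")
  case True then show ?thesis using sin_lower_pos[of t] assms by simp
next
  case False then show ?thesis using sin_lower_pos[of "-t"] assms by simp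
qed

definition Vp :: "nat \<Rightarrow> real \<Rightarrow> real" where "Vp n y = (\<Prod>i<n. cos (y / 2^(i+1)))"

lemma viete: "sin y = 2^n * sin (y / 2^n) * Vp n y"
proof (induction n)
  case 0 then show ?case by (simp add: Vp_def)
next
  case (Suc n)
  have "sin (y / 2^n) = 2 * sin (y / 2^(n+1)) * cos (y / 2^(n+1))"
    using sin_double[of "y / 2^(n+1)"] by simp
  then show ?case using Suc by (simp add: Vp_def algebra_simps)
qed

lemma Vp_bound: assumes "y \<noteq> 0" "\<bar>y\<bar> \<le> 2^n" shows "\<bar>Vp n y\<bar> \<le> 2 / \<bar>y\<bar>"
proof -
  have t: "\<bar>y / 2^n\<bar> \<le> 1" using assms by (simp add: divide_le_eq_1)
  have s: "\<bar>y / 2^n\<bar> / 2 \<le> \<bar>sin (y / 2^n)\<bar>" by (rule abs_sin_lower[OF t])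
  have "\<bar>y\<bar> / 2 \<le> 2^n * \<bar>sin (y / 2^n)\<bar>" using s by (simp add: field_simps)
  then have "\<bar>y\<bar> / 2 * \<bar>Vp n y\<bar> \<le> 2^n * \<bar>sin (y / 2^n)\<bar> * \<bar>Vp n y\<bar>"
    by (rule mult_right_mono) auto
  also have "\<dots> = \<bar>sin y\<bar>" by (subst viete[of y n]) (simp add: abs_mult)
  also have "\<dots> \<le> 1" by simp
  finally show ?thesis using assms by (simp add: field_simps)
qed

lemma prod_subset_le:
  fixes f :: "'a \<Rightarrow> real"
  assumes "finite B" "A \<subseteq> B" "\<And>k. k \<in> B \<Longrightarrow> 0 \<le> f k \<and> f k \<le> 1"
  shows "prod f B \<le> prod f A"
proof -
  have "prod f B = prod f A * prod f (B - A)"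
    using prod.subset_diff[OF assms(2,1)] by (simp add: mult.commute)
  moreover have "prod f (B - A) \<le> 1" using assms by (intro prod_le_1) auto
  moreover have "0 \<le> prod f A" using assms by (intro prod_nonneg) auto
  ultimately show ?thesis by (simp add: mult_left_le)
qed

lemma prod_one_minus:
  fixes u :: "'a \<Rightarrow> real"
  assumes "finite I" "\<And>k. k \<in> I \<Longrightarrow> 0 \<le> u k \<and> u k \<le> 1"
  shows "1 - sum u I \<le> (\<Prod>k\<in>I. 1 - u k)"
  using assms
proof (induction I rule: finite_induct)
  case (insert k I)
  have IH: "1 - sum u I \<le> (\<Prod>k\<in>I. 1 - u k)" using insert by auto
  have uk: "0 \<le> u k" "u k \<le> 1" using insert by auto
  have S: "0 \<le> sum u I" using insert by (intro sum_nonneg) auto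
  have "1 - sum u (insert k I) = 1 - u k - sum u I" using insert by simp
  also have "\<dots> \<le> (1 - u k) * (1 - sum u I)" using uk S by (simp add: algebra_simps mult_nonneg_nonneg)
  also have "\<dots> \<le> (1 - u k) * (\<Prod>k\<in>I. 1 - u k)" using IH uk by (intro mult_left_mono) auto
  finally show ?case using insert by simp
qed simp



definition cf :: "nat \<times> nat \<Rightarrow> real" where "cf p = 1 / 2^(fst p + snd p + 4)"
definition psiN :: "nat \<Rightarrow> real \<Rightarrow> real" where
  "psiN N x = (\<Prod>p\<in>{..<N}\<times>{..<N}. cos (cf p * x) ^ 2)"
definition cc :: "(nat \<times> nat) \<times> nat \<Rightarrow> real" where "cc k = cf (fst k)"
definition psi :: "real \<Rightarrow> real" where "psi x = lim (\<lambda>N. psiN N x)"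

lemma psiN_prod: "psiN N x = (\<Prod>k\<in>({..<N}\<times>{..<N})\<times>{..<2::nat}. cos (cc k * x))"
proof -
  have "(\<Prod>k\<in>({..<N}\<times>{..<N})\<times>{..<2::nat}. cos (cc k * x)) = (\<Prod>p\<in>{..<N}\<times>{..<N}. \<Prod>b\<in>{..<2::nat}. cos (cc (p,b) * x))"
    by (subst prod.cartesian_product) (simp add: case_prod_unfold)
  also have "\<dots> = psiN N x"
    unfolding psiN_def cc_def by (simp add: numeral_2_eq_2 lessThan_Suc power2_eq_square)
  finally show ?thesis by simp
qed

lemma geom_half_eq: "(\<Sum>i<N. (1/2::real)^i) = 2 - 2 * (1/2)^N"
  by (induction N) (simp_all add: field_simps)

lemma geom_half: "(\<Sum>i<N. (1/2::real)^i) \<le> 2"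
  unfolding geom_half_eq by simp

lemma cos_sq_le: "cos (t::real) ^ 2 \<le> 1"
proof -
  have "sin t ^ 2 + cos t ^ 2 = 1" by (rule sin_cos_squared_add)
  moreover have "0 \<le> sin t ^ 2" by simp
  ultimately show ?thesis by linarith
qed

lemma cc_sum: "(\<Sum>k\<in>({..<N}\<times>{..<N})\<times>{..<2::nat}. \<bar>cc k\<bar>) \<le> 1/2"
proof -
  have "(\<Sum>k\<in>({..<N}\<times>{..<N})\<times>{..<2::nat}. \<bar>cc k\<bar>) = (\<Sum>p\<in>{..<N}\<times>{..<N}. \<Sum>b\<in>{..<2::nat}. \<bar>cc (p,b)\<bar>)"
    by (subst sum.cartesian_product) (simp add: case_prod_unfold)
  also have "\<dots> = 2 * (\<Sum>p\<in>{..<N}\<times>{..<N}. cf p)"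
    by (simp add: cc_def cf_def numeral_2_eq_2 lessThan_Suc sum_distrib_left)
  also have "(\<Sum>p\<in>{..<N}\<times>{..<N}. cf p) = (\<Sum>j<N. \<Sum>i<N. (1/2)^j * (1/2)^i / 16)"
    by (subst sum.cartesian_product) (simp add: cf_def case_prod_unfold power_add power_divide)
  also have "\<dots> = (\<Sum>j<N. (1/2::real)^j) * (\<Sum>i<N. (1/2)^i) / 16"
    by (simp add: sum_product sum_divide_distrib)
  also have "\<dots> \<le> 2 * 2 / 16"
    using geom_half[of N] by (intro divide_right_mono mult_mono) (auto intro: sum_nonneg)
  finally show ?thesis by simp
qed

lemma psiN_nonneg: "0 \<le> psiN N x" unfolding psiN_def by (intro prod_nonneg) auto
lemma psiN_le1: "psiN N x \<le> 1" unfolding psiN_def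
  by (intro prod_le_1) (auto simp: cos_sq_le)

lemma psiN_dec: "decseq (\<lambda>N. psiN N x)"
proof (rule decseq_SucI)
  fix N
  show "psiN (Suc N) x \<le> psiN N x"
    unfolding psiN_def
    by (rule prod_subset_le) (auto simp: cos_sq_le)
qed

lemma psi_lim: "(\<lambda>N. psiN N x) \<longlonglongrightarrow> psi x" and psi_le: "psi x \<le> psiN N x"
proof -
  obtain L where L: "(\<lambda>N. psiN N x) \<longlonglongrightarrow> L" "\<forall>i. L \<le> psiN i x"
    using decseq_convergent[OF psiN_dec[of x], of 0] psiN_nonneg by blast
  then have "psi x = L" unfolding psi_def by (simp add: limI)
  with L show "(\<lambda>N. psiN N x) \<longlonglongrightarrow> psi x" "psi x \<le> psiN N x" by auto
qed

lemma psi_nonneg: "0 \<le> psi x"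
  using psi_lim[of x] psiN_nonneg by (intro LIMSEQ_le_const) auto

lemma psi_le1: "psi x \<le> 1" using psi_le[of x 0] psiN_le1[of 0 x] by simp

lemma psi_meas[measurable]: "psi \<in> borel_measurable borel"
  by (rule borel_measurable_LIMSEQ_real[OF psi_lim]) (simp add: psiN_def)

lemma psi_even: "psi (-x) = psi x"
  unfolding psi_def psiN_def by simp



lemma psiN_split: assumes "J \<le> N" shows "psiN N x \<le> (\<Prod>j<J. (Vp N (x / 2^(j+3)))^2)"
proof -
  have "psiN N x \<le> (\<Prod>p\<in>{..<J}\<times>{..<N}. cos (cf p * x) ^ 2)"
    unfolding psiN_def using assms by (intro prod_subset_le) (auto simp: cos_sq_le)
  also have "\<dots> = (\<Prod>j<J. \<Prod>i<N. cos (cf (j,i) * x) ^ 2)"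
    by (subst prod.cartesian_product) (simp add: case_prod_unfold)
  also have "\<dots> = (\<Prod>j<J. (Vp N (x / 2^(j+3)))^2)"
  proof (rule prod.cong[OF refl])
    fix j assume "j \<in> {..<J}"
    have "cf (j,i) * x = x / 2^(j+3) / 2^(i+1)" for i
      by (simp add: cf_def power_add field_simps)
    then show "(\<Prod>i<N. cos (cf (j,i) * x) ^ 2) = (Vp N (x / 2^(j+3)))^2"
      by (simp add: Vp_def prod_power_distrib)
  qed
  finally show ?thesis .
qed

lemma psi_decay: assumes "x \<noteq> 0" shows "psi x \<le> (\<Prod>j<J. (2*2^(j+3))^2) / (x^2)^J"
proof -
  define N where "N = J + nat \<lceil>\<bar>x\<bar>\<rceil>"
  have "\<bar>x\<bar> \<le> real N" unfolding N_def by linarith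
  also have "real n \<le> 2^n" for n
  proof (induction n)
    case (Suc n)
    have "1 \<le> (2::real)^n" by simp
    then show ?case using Suc.IH by (simp only: of_nat_Suc power_Suc)
  qed simp
  finally have xN: "\<bar>x\<bar> \<le> 2^N" .
  have "psi x \<le> psiN N x" by (rule psi_le)
  also have "\<dots> \<le> (\<Prod>j<J. (Vp N (x / 2^(j+3)))^2)" by (rule psiN_split) (simp add: N_def)
  also have "\<dots> \<le> (\<Prod>j<J. (2*2^(j+3))^2 / x^2)"
  proof (rule prod_mono)
    fix j assume "j \<in> {..<J}"
    let ?y = "x / 2^(j+3)"
    have y0: "?y \<noteq> 0" using assms by simp
    have "\<bar>?y\<bar> \<le> \<bar>x\<bar>" by (simp add: divide_le_eq abs_divide) (simp add: mult_le_cancel_left1)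
    then have "\<bar>?y\<bar> \<le> 2^N" using xN by linarith
    then have b: "\<bar>Vp N ?y\<bar> \<le> 2 / \<bar>?y\<bar>" by (rule Vp_bound[OF y0])
    have "(Vp N ?y)^2 = \<bar>Vp N ?y\<bar>^2" by simp
    also have "\<dots> \<le> (2 / \<bar>?y\<bar>)^2" using b by (intro power_mono) auto
    also have "\<dots> = (2*2^(j+3))^2 / x^2" by (simp add: abs_divide power_divide field_simps)
    finally show "0 \<le> (Vp N ?y)^2 \<and> (Vp N ?y)^2 \<le> (2*2^(j+3))^2 / x^2" by simp
  qed
  also have "\<dots> = (\<Prod>j<J. (2*2^(j+3))^2) / (x^2)^J"
    by (simp add: prod_dividef)
  finally show ?thesis .
qed

lemma cos_lower_abs: "\<bar>t\<bar> \<le> 1 \<Longrightarrow> 1 - \<bar>t\<bar> \<le> cos (t::real)"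
proof -
  assume t: "\<bar>t\<bar> \<le> 1"
  have "t^2 = \<bar>t\<bar> * \<bar>t\<bar>" by (simp add: power2_eq_square)
  also have "\<dots> \<le> \<bar>t\<bar> * 1" using t by (intro mult_left_mono) auto
  finally have "t^2/2 \<le> \<bar>t\<bar>" by simp
  then show ?thesis using cos_lower[of t] by linarith
qed

lemma psiN_lower: assumes "\<bar>x\<bar> \<le> 1" shows "1/2 \<le> psiN N x"
proof -
  let ?I = "({..<N}\<times>{..<N})\<times>{..<2::nat}"
  have ck: "0 \<le> cc k \<and> cc k \<le> 1" for k
  proof -
    have "(1::real) \<le> 2^(fst (fst k) + snd (fst k) + 4)" by (rule one_le_power) simp
    then show ?thesis by (simp add: cc_def cf_def)
  qed
  have u: "0 \<le> \<bar>cc k * x\<bar> \<and> \<bar>cc k * x\<bar> \<le> 1" for k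
    using ck[of k] assms by (simp add: abs_mult mult_le_one)
  have "1/2 \<le> 1 - (\<Sum>k\<in>?I. \<bar>cc k\<bar>)" using cc_sum[of N] by simp
  also have "\<dots> \<le> 1 - (\<Sum>k\<in>?I. \<bar>cc k * x\<bar>)"
  proof -
    have "(\<Sum>k\<in>?I. \<bar>cc k * x\<bar>) \<le> (\<Sum>k\<in>?I. \<bar>cc k\<bar>)"
      using assms by (intro sum_mono) (simp add: abs_mult mult_left_le)
    then show ?thesis by simp
  qed
  also have "\<dots> \<le> (\<Prod>k\<in>?I. 1 - \<bar>cc k * x\<bar>)" by (rule prod_one_minus) (use u in auto)
  also have "\<dots> \<le> (\<Prod>k\<in>?I. cos (cc k * x))"
    using u by (intro prod_mono) (auto intro!: cos_lower_abs)
  also have "\<dots> = psiN N x" by (simp add: psiN_prod)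
  finally show ?thesis .
qed

lemma psi_lower: assumes "\<bar>x\<bar> \<le> 1" shows "1/2 \<le> psi x"
  using psi_lim[of x] psiN_lower[OF assms] by (intro LIMSEQ_le_const) auto



lemma psi_poly: "\<exists>K. \<forall>x. psi x * (1 + \<bar>x\<bar>)^n \<le> K * inverse (1 + x^2)"
proof -
  define KJ :: real where "KJ = (\<Prod>j<Suc n. (2*2^(j+3))^2)"
  have KJ0: "0 \<le> KJ" unfolding KJ_def by (intro prod_nonneg) auto
  define K :: real where "K = 2^(n+1) * (1 + KJ)"
  have "psi x * (1 + \<bar>x\<bar>)^n \<le> K * inverse (1 + x^2)" for x
  proof (cases "\<bar>x\<bar> \<le> 1")
    case True
    have "psi x * (1 + \<bar>x\<bar>)^n \<le> 1 * 2^n"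
      using True psi_le1[of x] psi_nonneg[of x] by (intro mult_mono power_mono) auto
    also have "\<dots> \<le> 2^(n+1) * (1 + KJ) * (1/2)" using KJ0 by simp
    also have "\<dots> \<le> K * inverse (1 + x^2)"
    proof -
      have "x^2 \<le> 1" using power_mono[of "\<bar>x\<bar>" 1 2] True by simp
      then have "1/2 \<le> inverse (1 + x^2)"
        by (simp add: inverse_eq_divide le_divide_eq add_pos_nonneg)
      then show ?thesis unfolding K_def using KJ0 by (intro mult_left_mono) auto
    qed
    finally show ?thesis .
  next
    case False
    then have x1: "1 < \<bar>x\<bar>" by simp
    then have x0: "x \<noteq> 0" by auto
    have x2: "1 \<le> x^2" using power_mono[of 1 "\<bar>x\<bar>" 2] x1 by simp
    have "(1 + \<bar>x\<bar>)^n \<le> (2 * \<bar>x\<bar>)^n" using x1 by (intro power_mono) auto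
    also have "\<dots> = 2^n * \<bar>x\<bar>^n" by (simp add: power_mult_distrib)
    also have "\<bar>x\<bar>^n \<le> (x^2)^n"
    proof -
      have "\<bar>x\<bar>^n \<le> \<bar>x\<bar>^(2*n)" using x1 by (intro power_increasing) auto
      also have "\<dots> = (x^2)^n" by (simp add: power_mult)
      finally show ?thesis .
    qed
    finally have p: "(1 + \<bar>x\<bar>)^n \<le> 2^n * (x^2)^n" by simp
    have d: "psi x \<le> KJ / (x^2)^(Suc n)" unfolding KJ_def by (rule psi_decay[OF x0])
    have "psi x * (1 + \<bar>x\<bar>)^n \<le> KJ / (x^2)^(Suc n) * (2^n * (x^2)^n)"
      using d p psi_nonneg[of x] by (intro mult_mono) auto
    also have "\<dots> = 2^n * KJ / x^2" using x0 by (simp add: field_simps)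
    also have "\<dots> \<le> 2^n * KJ * (2 * inverse (1 + x^2))"
    proof -
      have "inverse (x^2) \<le> 2 * inverse (1 + x^2)" using x2 x0 by (simp add: field_simps)
      then show ?thesis using KJ0 by (simp add: divide_inverse mult_left_mono)
    qed
    also have "\<dots> \<le> K * inverse (1 + x^2)"
      unfolding K_def using KJ0 by (simp add: field_simps) (rule divide_right_mono, auto simp: add_pos_nonneg)
    finally show ?thesis .
  qed
  then show ?thesis by blast
qed

lemma psi_integrable_poly:
  assumes g: "g \<in> borel_measurable borel" and gb: "\<And>x. \<bar>g x\<bar> \<le> C * (1 + \<bar>x\<bar>)^n"
  shows "integrable lborel (\<lambda>x. psi x * g x)"
proof -
  obtain K where K: "\<And>x. psi x * (1 + \<bar>x\<bar>)^n \<le> K * inverse (1 + x^2)" using psi_poly by blast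
  show ?thesis
  proof (rule Bochner_Integration.integrable_bound)
    show "integrable lborel (\<lambda>x. C * K * inverse (1 + x^2))"
      using integrable_inv_1_sq by (intro integrable_mult_right)
    show "(\<lambda>x. psi x * g x) \<in> borel_measurable lborel" using g by measurable
    show "AE x in lborel. norm (psi x * g x) \<le> norm (C * K * inverse (1 + x^2))"
    proof (rule AE_I2)
      fix x
      have C0: "0 \<le> C" 
      proof -
        have "\<bar>g 0\<bar> \<le> C" using gb[of 0] by simp
        then show ?thesis by (meson abs_ge_zero order_trans)
      qed
      have "norm (psi x * g x) = psi x * \<bar>g x\<bar>" using psi_nonneg[of x] by (simp add: abs_mult)
      also have "\<dots> \<le> psi x * (C * (1 + \<bar>x\<bar>)^n)" using gb[of x] psi_nonneg[of x] by (intro mult_left_mono) auto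
      also have "\<dots> = C * (psi x * (1 + \<bar>x\<bar>)^n)" by simp
      also have "\<dots> \<le> C * (K * inverse (1 + x^2))" using K[of x] C0 by (intro mult_left_mono) auto
      also have "\<dots> \<le> norm (C * K * inverse (1 + x^2))" by simp
      finally show "norm (psi x * g x) \<le> norm (C * K * inverse (1 + x^2))" .
    qed
  qed
qed



lemma psi_integrable: "integrable lborel psi"
  using psi_integrable_poly[of "\<lambda>x. 1" 1 0] by simp

lemma GI_psi_bound:
  assumes e: "e > 0" and w: "1/2 \<le> \<bar>w\<bar>"
  shows "norm (GI e psi w) \<le> BB e (\<bar>w\<bar> - 1/2)"
proof -
  have lim: "(\<lambda>N. GI e (psiN N) w) \<longlonglongrightarrow> GI e psi w"
    unfolding GI_def
  proof (rule integral_dominated_convergence[where w="\<lambda>x. exp (- e * x^2)"])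
    show "(\<lambda>x. (psi x * exp (- e * x^2)) *\<^sub>R iexp (w * x)) \<in> borel_measurable lborel" by measurable
    show "(\<lambda>x. (psiN N x * exp (- e * x^2)) *\<^sub>R iexp (w * x)) \<in> borel_measurable lborel" for N
      unfolding psiN_def by measurable
    show "integrable lborel (\<lambda>x. exp (- e * x^2))" by (rule gauss_integrable[OF e])
    show "AE x in lborel. (\<lambda>N. (psiN N x * exp (- e * x^2)) *\<^sub>R iexp (w * x)) \<longlonglongrightarrow> (psi x * exp (- e * x^2)) *\<^sub>R iexp (w * x)"
      by (intro AE_I2 tendsto_intros psi_lim)
    show "AE x in lborel. norm ((psiN N x * exp (- e * x^2)) *\<^sub>R iexp (w * x)) \<le> exp (- e * x^2)" for N
      using psiN_nonneg psiN_le1 by (intro AE_I2) (simp add: norm_exp_i_times abs_mult mult_left_le_one_le)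
  qed
  have b: "norm (GI e (psiN N) w) \<le> BB e (\<bar>w\<bar> - 1/2)" for N
  proof -
    let ?I = "({..<N}\<times>{..<N})\<times>{..<2::nat}"
    have S: "(\<Sum>k\<in>?I. \<bar>cc k\<bar>) \<le> 1/2" by (rule cc_sum)
    have eq: "psiN N = (\<lambda>x. \<Prod>k\<in>?I. cos (cc k * x))" by (simp add: psiN_prod fun_eq_iff)
    have "norm (GI e (psiN N) w) \<le> BB e (\<bar>w\<bar> - (\<Sum>k\<in>?I. \<bar>cc k\<bar>))"
      unfolding eq using GI_prod_bound[OF e, of ?I cc] S w by auto
    also have "\<dots> \<le> BB e (\<bar>w\<bar> - 1/2)" using S w by (intro BB_mono[OF e]) auto
    finally show ?thesis .
  qed
  show ?thesis
    using tendsto_norm[OF lim] b by (intro LIMSEQ_le_const2) auto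
qed

lemma BB_lim: assumes d: "d > 0" shows "(\<lambda>m. BB (1 / real (Suc m)) d) \<longlonglongrightarrow> 0"
proof -
  define a where "a = d^2 / 4"
  have a: "a > 0" using d by (simp add: a_def)
  have f: "filterlim (\<lambda>m. a * real (Suc m)) at_top sequentially"
    using a by (intro filterlim_tendsto_pos_mult_at_top[OF tendsto_const a] filterlim_compose[OF filterlim_real_sequentially filterlim_Suc])
  have l: "(\<lambda>m. (a * real (Suc m)) ^ 1 / exp (a * real (Suc m))) \<longlonglongrightarrow> 0"
    by (rule filterlim_compose[OF tendsto_power_div_exp_0 f])
  have l2: "(\<lambda>m. (sqrt pi / a) * ((a * real (Suc m)) ^ 1 / exp (a * real (Suc m)))) \<longlonglongrightarrow> 0"
    using tendsto_mult[OF tendsto_const l, of "sqrt pi / a"] by simp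
  show ?thesis
  proof (rule tendsto_sandwich[OF _ _ tendsto_const l2])
    show "\<forall>\<^sub>F m in sequentially. 0 \<le> BB (1 / real (Suc m)) d" by (simp add: BB_def)
    show "\<forall>\<^sub>F m in sequentially. BB (1 / real (Suc m)) d \<le> sqrt pi / a * ((a * real (Suc m)) ^ 1 / exp (a * real (Suc m)))"
    proof (intro always_eventually allI)
      fix m
      have "BB (1 / real (Suc m)) d = sqrt pi * sqrt (real (Suc m)) * exp (- (a * real (Suc m)))"
      proof -
        have 1: "pi / (1 / real (Suc m)) = pi * real (Suc m)" by simp
        have 2: "- (d^2) / (4 * (1 / real (Suc m))) = - (a * real (Suc m))" by (simp add: a_def field_simps)
        show ?thesis unfolding BB_def 1 2 by (simp add: real_sqrt_mult)
      qed
      also have "\<dots> \<le> sqrt pi * real (Suc m) * exp (- (a * real (Suc m)))"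
      proof -
        have nn: "real (Suc m) \<le> real (Suc m) * real (Suc m)"
          by (simp only: mult_le_cancel_left1) simp
        have "sqrt (real (Suc m)) \<le> sqrt (real (Suc m) * real (Suc m))" using nn by (rule real_sqrt_le_mono)
        also have "\<dots> = real (Suc m)" by simp
        finally have "sqrt (real (Suc m)) \<le> real (Suc m)" .
        then show ?thesis by (intro mult_right_mono mult_left_mono) auto
      qed
      also have "\<dots> = sqrt pi / a * ((a * real (Suc m)) ^ 1 / exp (a * real (Suc m)))"
      proof -
        have ee: "exp (- (a * real (Suc m))) = 1 / exp (a * real (Suc m))" by (simp add: exp_minus inverse_eq_divide)
        show ?thesis unfolding ee using a by (simp del: of_nat_Suc add: field_simps)
      qed
      finally show "BB (1 / real (Suc m)) d \<le> sqrt pi / a * ((a * real (Suc m)) ^ 1 / exp (a * real (Suc m)))" .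
    qed
  qed
qed

lemma psi_ft_zero:
  assumes w: "1/2 < \<bar>w\<bar>"
  shows "(CLINT x|lborel. psi x *\<^sub>R iexp (w * x)) = 0"
proof -
  let ?e = "\<lambda>m. 1 / real (Suc m)"
  have lim: "(\<lambda>m. GI (?e m) psi w) \<longlonglongrightarrow> (CLINT x|lborel. psi x *\<^sub>R iexp (w * x))"
    unfolding GI_def
  proof (rule integral_dominated_convergence[where w=psi])
    show "(\<lambda>x. psi x *\<^sub>R iexp (w * x)) \<in> borel_measurable lborel" by measurable
    show "(\<lambda>x. (psi x * exp (- ?e m * x^2)) *\<^sub>R iexp (w * x)) \<in> borel_measurable lborel" for m
      by measurable
    show "integrable lborel psi" by (rule psi_integrable)
    show "AE x in lborel. (\<lambda>m. (psi x * exp (- ?e m * x^2)) *\<^sub>R iexp (w * x)) \<longlonglongrightarrow> psi x *\<^sub>R iexp (w * x)"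
    proof (rule AE_I2)
      fix x
      have "(\<lambda>m. ?e m) \<longlonglongrightarrow> 0" using LIMSEQ_inverse_real_of_nat by (simp add: inverse_eq_divide)
      then have "(\<lambda>m. (psi x * exp (- ?e m * x^2)) *\<^sub>R iexp (w * x)) \<longlonglongrightarrow> (psi x * exp (- 0 * x^2)) *\<^sub>R iexp (w * x)"
        by (intro tendsto_intros)
      then show "(\<lambda>m. (psi x * exp (- ?e m * x^2)) *\<^sub>R iexp (w * x)) \<longlonglongrightarrow> psi x *\<^sub>R iexp (w * x)" by simp
    qed
    show "AE x in lborel. norm ((psi x * exp (- ?e m * x^2)) *\<^sub>R iexp (w * x)) \<le> psi x" for m
      using psi_nonneg by (intro AE_I2) (simp add: norm_exp_i_times abs_mult mult_left_le)
  qed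
  have b: "norm (GI (?e m) psi w) \<le> BB (?e m) (\<bar>w\<bar> - 1/2)" for m
    using w by (intro GI_psi_bound) auto
  have "norm (CLINT x|lborel. psi x *\<^sub>R iexp (w * x)) \<le> 0"
  proof (rule tendsto_le[OF _ BB_lim tendsto_norm[OF lim]])
    show "\<forall>\<^sub>F m in sequentially. norm (GI (?e m) psi w) \<le> BB (?e m) (\<bar>w\<bar> - 1/2)" using b by simp
  qed (use w in simp_all)
  then show ?thesis by simp
qed



lemma affine_int: assumes "c > 0"
  shows "(\<integral>x. (c::real) *\<^sub>R h (c * x) \<partial>lborel) = (\<integral>x. (h x :: 'a::{banach, second_countable_topology}) \<partial>lborel)"
  using lborel_integral_real_affine[of c h 0] assms by simp

lemma Z_ge: "1 \<le> (\<integral>x. psi x \<partial>lborel)"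
proof -
  have i: "integrable lborel (\<lambda>x::real. (1/2::real) * indicator {-1..1} x)"
    by (intro integrable_mult_right integrable_real_indicator) auto
  have "(\<integral>x. (1/2::real) * indicator {-1..1::real} x \<partial>lborel) = 1" using content_real[of "-1::real" 1] by simp
  moreover have "(\<integral>x. (1/2::real) * indicator {-1..1::real} x \<partial>lborel) \<le> (\<integral>x. psi x \<partial>lborel)"
    using i psi_integrable
  proof (rule integral_mono)
    fix x show "(1/2::real) * indicator {-1..1} x \<le> psi x"
      using psi_lower[of x] psi_nonneg[of x] by (auto simp: indicator_def abs_le_iff)
  qed
  ultimately show ?thesis by simp
qed

lemma A_pos: "0 < (\<integral>x. psi x * \<bar>x\<bar> \<partial>lborel)"
proof -
  have i: "integrable lborel (\<lambda>x::real. (1/4::real) * indicator {1/2..1} x)"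
    by (intro integrable_mult_right integrable_real_indicator) (auto simp: less_top[symmetric])
  have ii: "integrable lborel (\<lambda>x. psi x * \<bar>x\<bar>)"
    using psi_integrable_poly[of "\<lambda>x. \<bar>x\<bar>" 1 1] by simp
  have "(\<integral>x. (1/4::real) * indicator {1/2..1::real} x \<partial>lborel) = 1/8" by simp
  moreover have "(\<integral>x. (1/4::real) * indicator {1/2..1::real} x \<partial>lborel) \<le> (\<integral>x. psi x * \<bar>x\<bar> \<partial>lborel)"
    using i ii
  proof (rule integral_mono)
    fix x
    show "(1/4::real) * indicator {1/2..1} x \<le> psi x * \<bar>x\<bar>"
    proof (cases "x \<in> {1/2..1}")
      case True
      then have "1/2 \<le> psi x" "1/2 \<le> \<bar>x\<bar>" using psi_lower[of x] by auto
      then have "1/2 * (1/2) \<le> psi x * \<bar>x\<bar>" by (intro mult_mono) auto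
      then show ?thesis using True by simp
    next
      case False then show ?thesis using psi_nonneg[of x] by simp
    qed
  qed
  ultimately show ?thesis by simp
qed



theorem lemma3:
  shows "\<exists>c1 c2 :: real. 0 < c1 \<and> c1 \<le> c2 \<and>
    (\<forall>\<Delta>::real. \<Delta> > 0 \<longrightarrow>
      (\<exists>f :: real \<Rightarrow> real.
         f \<in> borel_measurable borel \<and> (\<forall>x. 0 \<le> f x) \<and>
         (\<integral>\<^sup>+ x. ennreal (f x) \<partial>lborel) = 1 \<and>
         (let M = density lborel f in
            integrable M (\<lambda>x. \<bar>x\<bar>) \<and>
            c1 / \<Delta> \<le> (\<integral>x. \<bar>x\<bar> \<partial>M) \<and>
            (\<integral>x. \<bar>x\<bar> \<partial>M) \<le> c2 / \<Delta> \<and>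
            (\<forall>\<omega>::real. \<bar>\<omega>\<bar> \<ge> \<Delta> \<longrightarrow> char M \<omega> = 0) \<and>
            (\<forall>n::nat. integrable M (\<lambda>x. (x - (\<integral>y. y \<partial>M)) ^ n)))))"
proof -
  define Z where "Z = (\<integral>x. psi x \<partial>lborel)"
  define A where "A = (\<integral>x. psi x * \<bar>x\<bar> \<partial>lborel)"
  have Z: "1 \<le> Z" using Z_ge by (simp add: Z_def)
  have A: "0 < A" using A_pos by (simp add: A_def)
  have ii: "integrable lborel (\<lambda>x. psi x * \<bar>x\<bar>)"
    using psi_integrable_poly[of "\<lambda>x. \<bar>x\<bar>" 1 1] by simp
  have main: "\<exists>f :: real \<Rightarrow> real.
         f \<in> borel_measurable borel \<and> (\<forall>x. 0 \<le> f x) \<and>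
         (\<integral>\<^sup>+ x. ennreal (f x) \<partial>lborel) = 1 \<and>
         (let M = density lborel f in
            integrable M (\<lambda>x. \<bar>x\<bar>) \<and>
            (A/Z) / \<Delta> \<le> (\<integral>x. \<bar>x\<bar> \<partial>M) \<and>
            (\<integral>x. \<bar>x\<bar> \<partial>M) \<le> (A/Z) / \<Delta> \<and>
            (\<forall>\<omega>::real. \<bar>\<omega>\<bar> \<ge> \<Delta> \<longrightarrow> char M \<omega> = 0) \<and>
            (\<forall>n::nat. integrable M (\<lambda>x. (x - (\<integral>y. y \<partial>M)) ^ n)))" if D: "\<Delta> > 0" for \<Delta> :: real
  proof -
    define f where "f = (\<lambda>x. \<Delta> * psi (\<Delta> * x) / Z)"
    have fm[measurable]: "f \<in> borel_measurable borel" unfolding f_def by measurable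
    have fnn: "0 \<le> f x" for x unfolding f_def using D Z psi_nonneg by simp
    have pa: "integrable lborel (\<lambda>x. psi (0 + \<Delta> * x))"
      by (rule lborel_integrable_real_affine[OF psi_integrable]) (use D in simp)
    have fi: "integrable lborel f" unfolding f_def using pa by simp
    have fint: "(\<integral>x. f x \<partial>lborel) = 1"
    proof -
      have "(\<integral>x. f x \<partial>lborel) = (\<integral>x. \<Delta> *\<^sub>R psi (\<Delta> * x) \<partial>lborel) / Z"
        unfolding f_def by simp
      also have "(\<integral>x. \<Delta> *\<^sub>R psi (\<Delta> * x) \<partial>lborel) = Z" unfolding Z_def by (rule affine_int[OF D])
      finally show ?thesis using Z by simp
    qed
    have nn: "(\<integral>\<^sup>+ x. ennreal (f x) \<partial>lborel) = 1"
      using nn_integral_eq_integral[OF fi] fnn fint by simp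
    define M where "M = density lborel f"
    have iM: "integrable M g \<longleftrightarrow> integrable lborel (\<lambda>x. f x * g x)" if [measurable]: "g \<in> borel_measurable borel" for g :: "real \<Rightarrow> real"
      unfolding M_def by (subst integrable_density) (auto simp: fnn)
    have IM: "(\<integral>x. g x \<partial>M) = (\<integral>x. f x * g x \<partial>lborel)" if [measurable]: "g \<in> borel_measurable borel" for g :: "real \<Rightarrow> real"
      unfolding M_def by (subst integral_density) (auto simp: fnn)
    have fabs: "f x * \<bar>x\<bar> = (1 / (Z * \<Delta>)) * (\<Delta> *\<^sub>R (psi (\<Delta> * x) * \<bar>\<Delta> * x\<bar>))" for x
      unfolding f_def using D Z by (simp add: abs_mult field_simps)
    have ii2: "integrable lborel (\<lambda>x. psi (0 + \<Delta> * x) * \<bar>0 + \<Delta> * x\<bar>)"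
      by (rule lborel_integrable_real_affine[OF ii]) (use D in simp)
    have absm: "(\<lambda>x::real. \<bar>x\<bar>) \<in> borel_measurable borel" by measurable
    have int1: "integrable M (\<lambda>x. \<bar>x\<bar>)"
      unfolding iM[OF absm] fabs using ii2 D by simp
    have E1: "(\<integral>x. \<bar>x\<bar> \<partial>M) = (A/Z) / \<Delta>"
    proof -
      have "(\<integral>x. \<bar>x\<bar> \<partial>M) = (\<integral>x. (1 / (Z * \<Delta>)) * (\<Delta> *\<^sub>R (psi (\<Delta> * x) * \<bar>\<Delta> * x\<bar>)) \<partial>lborel)"
        unfolding IM[OF absm] fabs by simp
      also have "\<dots> = (1 / (Z * \<Delta>)) * (\<integral>x. \<Delta> *\<^sub>R (psi (\<Delta> * x) * \<bar>\<Delta> * x\<bar>) \<partial>lborel)"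
        by (rule integral_mult_right_zero)
      also have "(\<integral>x. \<Delta> *\<^sub>R (psi (\<Delta> * x) * \<bar>\<Delta> * x\<bar>) \<partial>lborel) = A"
        unfolding A_def using affine_int[OF D, of "\<lambda>y. psi y * \<bar>y\<bar>"] by simp
      finally show ?thesis using D Z by (simp add: field_simps)
    qed
    have ch: "char M w = 0" if w: "\<bar>w\<bar> \<ge> \<Delta>" for w
    proof -
      have "char M w = (CLINT x|lborel. f x *\<^sub>R iexp (w * x))"
        unfolding char_def M_def by (subst integral_density) (auto simp: fnn)
      also have "\<dots> = (CLINT x|lborel. (1/Z) *\<^sub>R (\<Delta> *\<^sub>R (psi (\<Delta> * x) *\<^sub>R iexp ((w/\<Delta>) * (\<Delta> * x)))))"
        by (rule Bochner_Integration.integral_cong[OF refl]) (use D in \<open>simp add: f_def scaleR_conv_of_real\<close>)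
      also have "\<dots> = (1/Z) *\<^sub>R (CLINT x|lborel. \<Delta> *\<^sub>R (psi (\<Delta> * x) *\<^sub>R iexp ((w/\<Delta>) * (\<Delta> * x))))"
        by (rule integral_scaleR_right)
      also have "(CLINT x|lborel. \<Delta> *\<^sub>R (psi (\<Delta> * x) *\<^sub>R iexp ((w/\<Delta>) * (\<Delta> * x)))) = (CLINT y|lborel. psi y *\<^sub>R iexp ((w/\<Delta>) * y))"
        using affine_int[OF D, of "\<lambda>y. psi y *\<^sub>R iexp ((w/\<Delta>) * y)"] by simp
      also have "\<dots> = 0"
      proof (rule psi_ft_zero)
        have "1 \<le> \<bar>w / \<Delta>\<bar>" using w D by (simp add: abs_divide)
        then show "1/2 < \<bar>w / \<Delta>\<bar>" by linarith
      qed
      finally show ?thesis by simp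
    qed
    have mom: "integrable M (\<lambda>x. (x - (\<integral>y. y \<partial>M)) ^ n)" for n
    proof -
      define mu where "mu = (\<integral>y. y \<partial>M)"
      define g where "g = (\<lambda>y. (y / \<Delta> - mu) ^ n)"
      define C where "C = (1 / \<Delta> + \<bar>mu\<bar>) ^ n"
      have gb: "\<bar>g y\<bar> \<le> C * (1 + \<bar>y\<bar>) ^ n" for y
      proof -
        have "\<bar>y / \<Delta> - mu\<bar> \<le> \<bar>y\<bar> / \<Delta> + \<bar>mu\<bar>" using abs_triangle_ineq4[of "y/\<Delta>" mu] D by (simp add: abs_divide)
        also have "\<dots> \<le> (1 / \<Delta> + \<bar>mu\<bar>) * (1 + \<bar>y\<bar>)"
          using D by (simp add: field_simps mult_nonneg_nonneg)
        finally have "\<bar>y / \<Delta> - mu\<bar> ^ n \<le> ((1 / \<Delta> + \<bar>mu\<bar>) * (1 + \<bar>y\<bar>)) ^ n"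
          by (intro power_mono) auto
        then show ?thesis unfolding g_def C_def by (simp add: power_abs power_mult_distrib)
      qed
      have gi: "integrable lborel (\<lambda>y. psi y * g y)"
        by (rule psi_integrable_poly[OF _ gb]) (simp add: g_def)
      have "integrable lborel (\<lambda>x. psi (0 + \<Delta> * x) * g (0 + \<Delta> * x))"
        by (rule lborel_integrable_real_affine[OF gi]) (use D in simp)
      then have "integrable lborel (\<lambda>x. (\<Delta> / Z) * (psi (\<Delta> * x) * g (\<Delta> * x)))"
        by (intro integrable_mult_right) simp
      moreover have "(\<lambda>x. (\<Delta> / Z) * (psi (\<Delta> * x) * g (\<Delta> * x))) = (\<lambda>x. f x * (x - mu) ^ n)"
        unfolding f_def g_def using D by (simp add: fun_eq_iff)
      ultimately have "integrable lborel (\<lambda>x. f x * (x - mu) ^ n)" by simp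
      then show ?thesis unfolding mu_def[symmetric] by (subst iM) auto
    qed
    show ?thesis
      apply (rule exI[of _ f])
      using fm fnn nn int1 E1 ch mom unfolding M_def Let_def by simp
  qed
  show ?thesis
    apply (rule exI[of _ "A/Z"], rule exI[of _ "A/Z"])
    using A Z main by simp
qed


end
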